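(* Let $\ell, s \in \mathbb{N}$ with $1\le s \leq \ell$, let $f,\Lambda,G,R,\Omega$ be as in the context, and let $\tau \in \mathbb{N}$ with $\tau \ge \deg_{\mathcal{H}}(\Lambda)$. Define $\Lambda_i := \Lambda^{s-i}\Omega^i$ for $i=0,\dots,s-1$ and $\Psi_t := \Lambda^s f^t$ for $t=1,\dots,\ell$. Then the vector $(\Lambda_0,\dots,\Lambda_{s-1},\Psi_1,\dots,\Psi_\ell)\in\mathcal{R}^{s+\ell}$ satisfies the conditions $$\sum_{i=0}^{s-1}\Lambda_i A_{t,i} \equiv \Psi_t \mod G_t \ \ (t=1,\dots,\ell),\qquad \deg_{\mathcal{H}}(\Lambda_i)\le s\tau+i(2g-1)\ \ (i=0,\dots,s-1),\qquad \deg_{\mathcal{H}}(\Psi_t)\le s\tau+tm\ \ (t=1,\dots,\ell),$$ where the congruences are in $\mathcal{R}$ (the difference lies in the ideal $G_t\mathcal{R}$).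
   Context: Let $q$ be a prime power and $\mathbb{F}_{q^2}$ the field with $q^2$ elements. The Hermitian curve $\mathcal{H}/\mathbb{F}_{q^2}$ is the smooth projective plane curve with affine equation $Y^q+Y=X^{q+1}$; it has genus $g=\tfrac12 q(q-1)$ and $q^3+1$ rational points $P_1,\dots,P_{q^3},P_\infty$, where $P_\infty$ is the point at infinity and $P_1,\dots,P_{q^3}$ are the affine rational points. Let $\mathcal{R} = \bigcup_{m\ge 0}\mathcal{L}(mP_\infty) = \mathbb{F}_{q^2}[X,Y]/(Y^q+Y-X^{q+1})$, which has $\mathbb{F}_{q^2}$-basis $\{X^iY^j : i\ge 0,\ 0\le j<q\}$, and let $\deg_{\mathcal{H}}(h) = -v_{P_\infty}(h)$ (so $\deg_{\mathcal{H}}(X^iY^j) = iq+j(q+1)$, $\deg_{\mathcal{H}}(0)=-\infty$). Let $n=q^3$ and $m\in\mathbb{N}$ with $2(g-1)<m<n$. Let $f \in \mathcal{L}(mP_\infty)$ (so $\deg_{\mathcal{H}} f \le m$), $\mathbf{c}=(f(P_1),\dots,f(P_n))$, $\mathbf{e}\in\mathbb{F}_{q^2}^n$, received word $\mathbf{r} = \mathbf{c}+\mathbf{e}$, and error positions $\mathcal{E}=\{i : e_i\neq 0\}$. An error locator is a nonzero $\Lambda \in \mathcal{R}$ with $\Lambda(P_i)=0$ for all $i\in\mathcal{E}$; fix one. Let $R\in\mathcal{R}$ with $\deg_{\mathcal{H}}(R) < n+2g$ and $R(P_i)=r_i$ for $i=1,\dots,n$. Let $G = X^{q^2}-X\in\mathcal{R}$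 (so $\deg_{\mathcal{H}} G = n$). Let $\Omega\in\mathcal{R}$ be the unique element with $\Omega G = \Lambda(f-R)$. For $t=1,\dots,\ell$ and $i=0,\dots,s-1$ set $A_{t,i} := \binom{t}{i}R^{t-i}G^i$ (which is $0$ if $i>t$), and $$G_t := X^{\lfloor (t(n+2g-1)+\tau)/q\rfloor+1} \text{ for } t=1,\dots,s-1,\qquad G_t := G^s \text{ for } t=s,\dots,\ell.$$ *)

theory Defs
  imports "HOL-Computational_Algebra.Polynomial" "HOL-Computational_Algebra.Primes"
    "HOL-Library.Extended_Real"
begin

text \<open>Elements of the coordinate ring R = F[X,Y]/(Y^q+Y-X^(q+1)) of the Hermitian curve are
  represented by bivariate polynomials of type 'a poly poly: the outer variable is Y,
  the inner (coefficient) variable is X.\<close>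

definition hX :: "'a::comm_ring_1 poly poly" where
  "hX = [:[:0, 1:]:]"

definition hY :: "'a::comm_ring_1 poly poly" where
  "hY = [:0, 1:]"

definition herm_poly :: "nat \<Rightarrow> 'a::comm_ring_1 poly poly" where
  "herm_poly q = hY ^ q + hY - hX ^ (q + 1)"

definition herm_eq :: "nat \<Rightarrow> 'a::comm_ring_1 poly poly \<Rightarrow> 'a poly poly \<Rightarrow> bool" where
  "herm_eq q a b \<longleftrightarrow> herm_poly q dvd (a - b)"

definition herm_cong :: "nat \<Rightarrow> 'a::comm_ring_1 poly poly \<Rightarrow> 'a poly poly \<Rightarrow> 'a poly poly \<Rightarrow> bool" where
  "herm_cong q a b c \<longleftrightarrow> (\<exists>h. herm_eq q (a - b) (c * h))"

text \<open>Reduced representative in the basis X^i Y^j, j < q (the divisor is monic in Y).\<close>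
definition herm_red :: "nat \<Rightarrow> 'a::idom poly poly \<Rightarrow> 'a poly poly" where
  "herm_red q p = pseudo_mod p (herm_poly q)"

text \<open>deg_H(h) = - v_{P_infinity}(h): maximum of i q + j (q+1) over the monomials X^i Y^j
  occurring in the reduced representative; deg_H 0 = -infinity (Sup of the empty set).\<close>
definition herm_deg :: "nat \<Rightarrow> 'a::idom poly poly \<Rightarrow> ereal" where
  "herm_deg q p = (SUP ij \<in> {(i, j). coeff (coeff (herm_red q p) j) i \<noteq> 0}.
                     ereal (real (fst ij * q + snd ij * (q + 1))))"

definition herm_eval :: "'a::comm_ring_1 poly poly \<Rightarrow> 'a \<times> 'a \<Rightarrow> 'a" where
  "herm_eval p P = poly (map_poly (\<lambda>c. poly c (fst P)) p) (snd P)"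

definition herm_affine_points :: "nat \<Rightarrow> ('a::comm_ring_1 \<times> 'a) set" where
  "herm_affine_points q = {(a, b). b ^ q + b = a ^ (q + 1)}"

end

theory Submission
  imports Defs "HOL-Computational_Algebra.Polynomial"
begin


lemma const_pow: "[:a:]^n = [:(a::'a::comm_ring_1)^n:]"
  by (induct n) (auto simp: one_pCons)

lemma hY_pow: "(hY :: 'a::comm_ring_1 poly poly)^n = monom 1 n"
  by (simp add: hY_def monom_altdef)

lemma hX_pow: "(hX :: 'a::comm_ring_1 poly poly)^n = [:monom 1 n:]"
  by (simp add: hX_def const_pow monom_altdef)

lemma herm_coeff: "coeff (herm_poly q :: 'a::comm_ring_1 poly poly) j =
   (if j = q then 1 else 0) + (if j = 1 then 1 else 0) - (if j = 0 then monom 1 (q+1) else 0)"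
  unfolding herm_poly_def hY_pow hX_pow
  by (simp add: hY_def coeff_pCons split: nat.split)

lemma herm_degree: assumes "q \<ge> 2" shows "degree (herm_poly q :: 'a::comm_ring_1 poly poly) = q"
proof (rule antisym)
  show "degree (herm_poly q :: 'a poly poly) \<le> q"
    by (rule degree_le) (use assms in \<open>auto simp: herm_coeff\<close>)
  show "q \<le> degree (herm_poly q :: 'a poly poly)"
    by (rule le_degree) (use assms in \<open>auto simp: herm_coeff\<close>)
qed

lemma herm_lead: assumes "q \<ge> 2" shows "coeff (herm_poly q :: 'a::comm_ring_1 poly poly) q = 1"
  using assms by (auto simp: herm_coeff)

lemma herm_nz: assumes "q \<ge> 2" shows "herm_poly q \<noteq> (0 :: 'a::comm_ring_1 poly poly)"
  using herm_lead[OF assms] by (metis coeff_0 zero_neq_one)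



definition Wt :: "nat \<Rightarrow> 'a::comm_ring_1 poly poly \<Rightarrow> real \<Rightarrow> bool" where
  "Wt q p d \<longleftrightarrow> (\<forall>i j. coeff (coeff p j) i \<noteq> 0 \<longrightarrow> real (i*q + j*(q+1)) \<le> d)"

lemma Wt_0[simp]: "Wt q 0 d" by (simp add: Wt_def)

lemma Wt_1: "Wt q 1 0"
  by (auto simp: Wt_def coeff_1 split: if_splits)

lemma Wt_mono: "Wt q p d \<Longrightarrow> d \<le> d' \<Longrightarrow> Wt q p d'"
  by (force simp: Wt_def)

lemma Wt_diff: "Wt q a d \<Longrightarrow> Wt q b d \<Longrightarrow> Wt q (a - b) d"
  by (force simp: Wt_def)

lemma Wt_add: "Wt q a d \<Longrightarrow> Wt q b d \<Longrightarrow> Wt q (a + b) d"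
  by (force simp: Wt_def)

lemma Wt_mult: assumes a: "Wt q a da" and b: "Wt q b db" shows "Wt q (a * b) (da + db)"
  unfolding Wt_def
proof (intro allI impI)
  fix i j assume nz: "coeff (coeff (a * b) j) i \<noteq> 0"
  have "\<exists>u\<le>j. \<exists>v\<le>i. coeff (coeff a u) v \<noteq> 0 \<and> coeff (coeff b (j-u)) (i-v) \<noteq> 0"
  proof (rule ccontr)
    assume H: "\<not> ?thesis"
    have "coeff (coeff (a * b) j) i = (\<Sum>u\<le>j. \<Sum>v\<le>i. coeff (coeff a u) v * coeff (coeff b (j-u)) (i-v))"
      by (simp add: coeff_mult coeff_sum)
    also have "\<dots> = 0"
      by (rule sum.neutral, intro ballI, rule sum.neutral) (use H in force)
    finally show False using nz by simp
  qed
  then obtain u v where uv: "u \<le> j" "v \<le> i" "coeff (coeff a u) v \<noteq> 0" "coeff (coeff b (j-u)) (i-v) \<noteq> 0"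
    by blast
  have 1: "real (v*q + u*(q+1)) \<le> da" using a uv unfolding Wt_def by blast
  have 2: "real ((i-v)*q + (j-u)*(q+1)) \<le> db" using b uv unfolding Wt_def by blast
  have "(v*q + u*(q+1)) + ((i-v)*q + (j-u)*(q+1)) = (v + (i-v))*q + (u + (j-u))*(q+1)"
    by (simp only: add_mult_distrib)
  also have "\<dots> = i*q + j*(q+1)" using uv(1,2) by simp
  finally have "real (i*q + j*(q+1)) = real (v*q + u*(q+1)) + real ((i-v)*q + (j-u)*(q+1))"
    by (metis of_nat_add)
  then show "real (i*q + j*(q+1)) \<le> da + db" using 1 2 by linarith
qed

lemma Wt_herm: assumes "q \<ge> 2" shows "Wt q (herm_poly q) (real (q*(q+1)))"
proof -
  have "1 \<le> q*q" using assms by (simp add: Suc_le_eq)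
  then have "1 \<le> real q * real q" by (metis of_nat_1 of_nat_le_iff of_nat_mult)
  then show ?thesis using assms
    by (auto simp: Wt_def herm_coeff coeff_monom algebra_simps split: if_splits)
qed

lemma Wt_monom: "(\<And>i. coeff c i \<noteq> 0 \<Longrightarrow> real (i*q + k*(q+1)) \<le> d) \<Longrightarrow> Wt q (monom c k) d"
  by (auto simp: Wt_def coeff_monom split: if_splits)

lemma reduce_exists:
  fixes p :: "'a::comm_ring_1 poly poly"
  assumes q2: "q \<ge> 2"
  shows "Wt q p d \<Longrightarrow> \<exists>r. degree r < q \<and> herm_poly q dvd (p - r) \<and> Wt q r d"
proof (induction "degree p" arbitrary: p rule: less_induct)
  case less
  show ?case
  proof (cases "degree p < q")
    case True then show ?thesis using less.prems by (intro exI[of _ p]) auto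
  next
    case False
    define k where "k = degree p"
    define c where "c = coeff p k"
    define p2 where "p2 = p - monom c (k-q) * herm_poly q"
    have kq: "q \<le> k" using False k_def by simp
    have dm: "degree (monom c (k-q) * herm_poly q) \<le> k"
      using degree_mult_le[of "monom c (k-q)" "herm_poly q"] degree_monom_le[of c "k-q"]
        herm_degree[OF q2, where 'a='a] kq by linarith
    have dp2: "degree p2 \<le> k" unfolding p2_def
      using degree_diff_le[OF _ dm, of p] k_def by simp
    have ck: "coeff p2 k = 0"
      using kq herm_lead[OF q2, where 'a='a] by (simp add: p2_def coeff_monom_mult c_def)
    have kpos: "k > 0" using kq q2 by simp
    have lt: "degree p2 < degree p"
    proof (cases "p2 = 0")
      case True then show ?thesis using kpos k_def by simp
    next
      case False
      then have "degree p2 \<noteq> k" using ck by auto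
      then show ?thesis using dp2 k_def by simp
    qed
    have Wm: "Wt q (monom c (k-q)) (d - real (q*(q+1)))"
    proof (rule Wt_monom)
      fix i assume "coeff c i \<noteq> 0"
      then have 1: "real (i*q + k*(q+1)) \<le> d" using less.prems unfolding Wt_def c_def by blast
      have "(k-q)*(q+1) + q*(q+1) = (k-q+q)*(q+1)" by (simp only: add_mult_distrib)
      then have "i*q + k*(q+1) = (i*q + (k-q)*(q+1)) + q*(q+1)" using kq by simp
      then have "real (i*q + k*(q+1)) = real (i*q + (k-q)*(q+1)) + real (q*(q+1))"
        by (metis of_nat_add)
      with 1 show "real (i*q + (k-q)*(q+1)) \<le> d - real (q*(q+1))" by simp
    qed
    have "Wt q (monom c (k-q) * herm_poly q) d"
      using Wt_mult[OF Wm Wt_herm[OF q2]] by simp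
    then have "Wt q p2 d" unfolding p2_def
      using Wt_diff[OF less.prems] by blast
    from less.hyps[OF lt this] obtain r where r: "degree r < q" "herm_poly q dvd (p2 - r)" "Wt q r d"
      by blast
    have "p - r = (p2 - r) + herm_poly q * monom c (k-q)" by (simp add: p2_def algebra_simps)
    then have "herm_poly q dvd (p - r)" using r(2) by (metis dvd_add dvd_triv_left)
    then show ?thesis using r by blast
  qed
qed

lemma reduced_unique:
  fixes a b :: "'a::idom poly poly"
  assumes q2: "q \<ge> 2" and "degree a < q" "degree b < q" "herm_poly q dvd (a - b)"
  shows "a = b"
proof (rule ccontr)
  assume ne: "a \<noteq> b"
  obtain c where c: "a - b = herm_poly q * c" using assms(4) by (auto elim: dvdE)
  have "c \<noteq> 0" using c ne by auto
  then have "degree (a - b) = q + degree c"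
    using c degree_mult_eq[OF herm_nz[OF q2] \<open>c \<noteq> 0\<close>] herm_degree[OF q2] by simp
  moreover have "degree (a - b) < q"
    using degree_diff_le_max[of a b] assms(2,3) by simp
  ultimately show False by simp
qed

lemma herm_red_props:
  fixes p :: "'a::idom poly poly"
  assumes q2: "q \<ge> 2"
  shows "degree (herm_red q p) < q" "herm_poly q dvd (p - herm_red q p)"
proof -
  obtain qq where pd: "pseudo_divmod p (herm_poly q) = (qq, herm_red q p)"
    by (metis herm_red_def pseudo_mod_def prod.collapse)
  note P = pseudo_divmod[OF herm_nz[OF q2] pd]
  have lc: "coeff (herm_poly q :: 'a poly poly) (degree (herm_poly q)) = 1"
    using herm_lead[OF q2] herm_degree[OF q2] by metis
  from P(1) have "p = herm_poly q * qq + herm_red q p" by (simp add: lc)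
  then show "herm_poly q dvd (p - herm_red q p)" by (metis add_diff_cancel_right' dvd_triv_left)
  from P(2) show "degree (herm_red q p) < q" using herm_degree[OF q2] q2
    by (auto simp: herm_degree[OF q2])
qed




lemma herm_deg_le_iff: "herm_deg q p \<le> ereal d \<longleftrightarrow> Wt q (herm_red q p) d"
  unfolding herm_deg_def Wt_def by (auto simp: SUP_le_iff)

lemma herm_deg_lt_nat:
  assumes "herm_deg q p < ereal (real N)" shows "herm_deg q p \<le> ereal (real N - 1)"
  unfolding herm_deg_le_iff Wt_def
proof (intro allI impI)
  fix i j assume nz: "coeff (coeff (herm_red q p) j) i \<noteq> 0"
  have "ereal (real (i*q + j*(q+1))) \<le> herm_deg q p"
    unfolding herm_deg_def by (rule SUP_upper2[of "(i,j)"]) (use nz in auto)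
  then have "ereal (real (i*q + j*(q+1))) < ereal (real N)" using assms by (rule order_le_less_trans)
  then have "i*q + j*(q+1) < N" by (simp only: less_ereal.simps(1) of_nat_less_iff)
  then show "real (i*q + j*(q+1)) \<le> real N - 1" by linarith
qed
context fixes q :: nat assumes q2: "q \<ge> 2" begin

lemma red_cong:
  fixes a b :: "'a::idom poly poly"
  assumes "herm_poly q dvd (a - b)" shows "herm_red q a = herm_red q b"
proof (rule reduced_unique[OF q2 herm_red_props(1)[OF q2] herm_red_props(1)[OF q2]])
  have "herm_red q a - herm_red q b = (a - b) - (a - herm_red q a) + (b - herm_red q b)"
    by (simp add: algebra_simps)
  show "herm_poly q dvd (herm_red q a - herm_red q b)"
    unfolding \<open>herm_red q a - herm_red q b = _\<close>
    by (rule dvd_add[OF dvd_diff[OF assms herm_red_props(2)[OF q2, of a]] herm_red_props(2)[OF q2, of b]])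
qed

lemma Wt_red:
  fixes p :: "'a::idom poly poly"
  assumes "Wt q p d" shows "Wt q (herm_red q p) d"
proof -
  obtain r where r: "degree r < q" "herm_poly q dvd (p - r)" "Wt q r d"
    using reduce_exists[OF q2 assms] by blast
  have "herm_red q p = herm_red q r" by (rule red_cong) fact
  also have "herm_red q r = r"
  proof (rule reduced_unique[OF q2 herm_red_props(1)[OF q2] r(1)])
    have "herm_red q r - r = - (r - herm_red q r)" by simp
    show "herm_poly q dvd (herm_red q r - r)"
      unfolding \<open>herm_red q r - r = _\<close> dvd_minus_iff by (rule herm_red_props(2)[OF q2])
  qed
  finally show ?thesis using r(3) by simp
qed

lemma Wd_of:
  fixes p x :: "'a::idom poly poly"
  assumes "Wt q p d" "herm_poly q dvd (x - p)" shows "herm_deg q x \<le> ereal d"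
  unfolding herm_deg_le_iff using red_cong[OF assms(2)] Wt_red[OF assms(1)] by simp

lemma red_dvd: "herm_poly q dvd (x - herm_red q (x :: 'a::idom poly poly))"
  by (rule herm_red_props(2)[OF q2])

lemma Wd_mult:
  fixes a b :: "'a::idom poly poly"
  assumes "herm_deg q a \<le> ereal da" "herm_deg q b \<le> ereal db"
  shows "herm_deg q (a * b) \<le> ereal (da + db)"
proof (rule Wd_of)
  show "Wt q (herm_red q a * herm_red q b) (da + db)"
    using assms by (intro Wt_mult) (auto simp: herm_deg_le_iff)
  have "a * b - herm_red q a * herm_red q b = (a - herm_red q a) * b + herm_red q a * (b - herm_red q b)"
    by (simp add: algebra_simps)
  show "herm_poly q dvd (a * b - herm_red q a * herm_red q b)"
    unfolding \<open>a * b - herm_red q a * herm_red q b = _\<close>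
    by (rule dvd_add[OF dvd_mult2[OF red_dvd[of a]] dvd_mult[OF red_dvd[of b]]])
qed

lemma Wd_diff:
  fixes a b :: "'a::idom poly poly"
  assumes "herm_deg q a \<le> ereal d" "herm_deg q b \<le> ereal d"
  shows "herm_deg q (a - b) \<le> ereal d"
proof (rule Wd_of)
  show "Wt q (herm_red q a - herm_red q b) d"
    using assms by (intro Wt_diff) (auto simp: herm_deg_le_iff)
  have "a - b - (herm_red q a - herm_red q b) = (a - herm_red q a) - (b - herm_red q b)"
    by (simp add: algebra_simps)
  show "herm_poly q dvd (a - b - (herm_red q a - herm_red q b))"
    unfolding \<open>a - b - (herm_red q a - herm_red q b) = _\<close>
    by (rule dvd_diff[OF red_dvd[of a] red_dvd[of b]])
qed

lemma Wd_pow: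
  fixes a :: "'a::idom poly poly"
  assumes "herm_deg q a \<le> ereal d"
  shows "herm_deg q (a ^ k) \<le> ereal (real k * d)"
proof (induction k)
  case 0
  show ?case by (simp, rule Wd_of[OF Wt_1]) simp
next
  case (Suc k)
  have "herm_deg q (a * a ^ k) \<le> ereal (d + real k * d)" by (rule Wd_mult[OF assms Suc])
  then show ?case by (simp add: algebra_simps)
qed

lemma Wd_cong:
  fixes a b :: "'a::idom poly poly"
  assumes "herm_poly q dvd (a - b)" shows "herm_deg q a = herm_deg q b"
  unfolding herm_deg_def using red_cong[OF assms] by simp

end


lemma dvd_pow_diff: fixes H a b :: "'b::comm_ring_1"
  assumes "H dvd (a - b)" shows "H dvd (a^n - b^n)"
proof (induction n)
  case 0 then show ?case by simp
next
  case (Suc n)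
  have "a^Suc n - b^Suc n = a*(a^n - b^n) + (a - b)*b^n" by (simp add: algebra_simps)
  then show ?case using Suc assms by (simp add: dvd_add dvd_mult dvd_mult2)
qed

lemma cong_main:
  fixes H L W G f R :: "'b::comm_ring_1" and s t :: nat
  assumes OG: "H dvd (W*G - L*(f-R))"
  defines "A \<equiv> (\<Sum>i<s. (L^(s-i)*W^i) * (of_nat (t choose i) * R^(t-i) * G^i))"
  shows "t < s \<Longrightarrow> H dvd (A - L^s*f^t)"
    and "s \<le> t \<Longrightarrow> \<exists>h. H dvd (A - L^s*f^t - G^s * h)"
proof -
  define T where "T i = of_nat (t choose i) * R^(t-i) * (L^s * (f-R)^i)" for i
  define S where "S = (\<Sum>i<s. T i)"
  have termc: "H dvd ((L^(s-i)*W^i) * (of_nat (t choose i) * R^(t-i) * G^i) - T i)" if "i < s" for i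
  proof -
    have "L^(s-i) * L^i = L^s" using that by (simp add: power_add[symmetric])
    then have "L^(s-i) * (L*(f-R))^i = L^s * (f-R)^i"
      by (metis mult.assoc power_mult_distrib)
    then have e2: "T i = (of_nat (t choose i) * R^(t-i) * L^(s-i)) * (L*(f-R))^i"
      unfolding T_def by (metis mult.assoc)
    have e1: "(L^(s-i)*W^i) * (of_nat (t choose i) * R^(t-i) * G^i)
        = (of_nat (t choose i) * R^(t-i) * L^(s-i)) * (W*G)^i"
      by (simp add: power_mult_distrib ac_simps)
    have "(L^(s-i)*W^i) * (of_nat (t choose i) * R^(t-i) * G^i) - T i
        = (of_nat (t choose i) * R^(t-i) * L^(s-i)) * ((W*G)^i - (L*(f-R))^i)"
      unfolding e1 e2 by (rule right_diff_distrib[symmetric])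
    then show ?thesis using dvd_pow_diff[OF OG, of i] by (simp add: dvd_mult)
  qed
  have AS: "H dvd (A - S)"
    unfolding A_def S_def sum_subtractf[symmetric] by (rule dvd_sum) (use termc in auto)
  have binom: "L^s*f^t = (\<Sum>i\<le>t. T i)"
  proof -
    have "f^t = ((f-R) + R)^t" by simp
    also have "\<dots> = (\<Sum>i\<le>t. of_nat (t choose i) * (f-R)^i * R^(t-i))" by (rule binomial_ring)
    finally show ?thesis by (simp add: T_def sum_distrib_left algebra_simps)
  qed
  {
    assume ts: "t < s"
    have "(\<Sum>i\<le>t. T i) = S" unfolding S_def
      by (rule sum.mono_neutral_left) (use ts in \<open>auto simp: T_def binomial_eq_0 not_le[symmetric]\<close>)
    then show "H dvd (A - L^s*f^t)" using AS binom by simp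
  }
  {
    assume st: "s \<le> t"
    define K where "K = (\<Sum>i\<in>{s..t}. of_nat (t choose i) * R^(t-i) * (f-R)^(i-s))"
    have split: "{..t} = {..<s} \<union> {s..t}" using st by auto
    have "(\<Sum>i\<le>t. T i) = S + (\<Sum>i\<in>{s..t}. T i)"
      unfolding split S_def by (rule sum.union_disjoint) auto
    also have "(\<Sum>i\<in>{s..t}. T i) = (L*(f-R))^s * K"
      unfolding K_def sum_distrib_left
    proof (rule sum.cong[OF refl])
      fix i assume "i \<in> {s..t}"
      then have "(f-R)^i = (f-R)^s * (f-R)^(i-s)" by (simp add: power_add[symmetric])
      then show "T i = (L*(f-R))^s * (of_nat (t choose i) * R^(t-i) * (f-R)^(i-s))"
        by (simp add: T_def power_mult_distrib ac_simps)
    qed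
    finally have B: "L^s*f^t = S + (L*(f-R))^s * K" using binom by simp
    have "A - L^s*f^t - G^s * (-(W^s*K)) = (A - S) + ((W*G)^s - (L*(f-R))^s) * K"
      by (simp add: B power_mult_distrib algebra_simps)
    moreover have "H dvd \<dots>" using AS dvd_pow_diff[OF OG, of s] by (simp add: dvd_add dvd_mult2)
    ultimately show "\<exists>h. H dvd (A - L^s*f^t - G^s * h)" by metis
  }
qed



context fixes q :: nat assumes q2: "q \<ge> 2" begin

lemma red_reduced: fixes x :: "'a::idom poly poly" assumes "degree x < q" shows "herm_red q x = x"
proof (rule reduced_unique[OF q2 herm_red_props(1)[OF q2] assms])
  have "herm_red q x - x = - (x - herm_red q x)" by simp
  show "herm_poly q dvd (herm_red q x - x)"
    unfolding \<open>herm_red q x - x = _\<close> dvd_minus_iff by (rule herm_red_props(2)[OF q2])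
qed

lemma Wd_G:
  fixes W :: "'a::idom poly poly"
  assumes A: "herm_deg q (W * (hX^(q^2) - hX)) \<le> ereal D"
  shows "herm_deg q W \<le> ereal (D - real (q^3))"
proof -
  define gX :: "'a poly" where "gX = monom 1 (q^2) - monom 1 1"
  have G: "(hX^(q^2) - hX :: 'a poly poly) = [:gX:]"
  proof -
    have h1: "(hX::'a poly poly) = [:monom 1 1:]" using hX_pow[of 1, where 'a='a] by simp
    show ?thesis unfolding hX_pow gX_def unfolding h1 by simp
  qed
  have "2*2 \<le> q*q" using mult_le_mono[OF q2 q2] .
  then have q4: "4 \<le> q^2" by (simp add: power2_eq_square)
  then have q21: "q^2 \<noteq> 1" by linarith
  have cg: "coeff gX k = (if k = q^2 then 1 else 0) - (if k = 1 then 1 else 0)" for k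
    by (simp add: gX_def coeff_monom)
  have lg: "coeff gX (q^2) = 1" using q21 by (simp add: cg)
  have dg: "degree gX = q^2"
  proof (rule antisym)
    show "degree gX \<le> q^2"
      by (rule degree_le) (use q4 in \<open>auto simp: cg\<close>)
    show "q^2 \<le> degree gX" by (rule le_degree) (simp add: lg)
  qed
  have gnz: "gX \<noteq> 0" using lg by auto
  define r where "r = herm_red q W"
  have rdeg: "degree r < q" unfolding r_def by (rule herm_red_props(1)[OF q2])
  have e: "W * [:gX:] - smult gX r = (W - r) * [:gX:]" by (simp add: smult_diff_right)
  have "herm_poly q dvd (W * [:gX:] - smult gX r)"
    unfolding e unfolding r_def by (rule dvd_mult2[OF red_dvd[OF q2]])
  then have "herm_red q (W * [:gX:]) = herm_red q (smult gX r)" by (rule red_cong[OF q2])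
  also have "\<dots> = smult gX r"
    by (rule red_reduced) (use degree_smult_le[of gX r] rdeg in linarith)
  finally have Wr: "Wt q (smult gX r) D" using A unfolding G herm_deg_le_iff by simp
  have "Wt q r (D - real (q^3))"
    unfolding Wt_def
  proof (intro allI impI)
    fix i j assume nz: "coeff (coeff r j) i \<noteq> 0"
    define c where "c = coeff r j"
    have cnz: "c \<noteq> 0" using nz c_def by auto
    have ic: "i \<le> degree c" using nz c_def le_degree by blast
    have dgc: "degree (gX * c) = q^2 + degree c" using degree_mult_eq[OF gnz cnz] dg by simp
    have "coeff (gX * c) (q^2 + degree c) \<noteq> 0"
      using lead_coeff_mult[of gX c] dgc dg lg cnz by simp
    then have "coeff (coeff (smult gX r) j) (q^2 + degree c) \<noteq> 0" by (simp add: c_def)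
    then have 1: "real ((q^2 + degree c)*q + j*(q+1)) \<le> D" using Wr unfolding Wt_def by blast
    have "i*q \<le> degree c * q" using ic by simp
    then have "i*q + j*(q+1) + q^3 \<le> (q^2 + degree c)*q + j*(q+1)"
      by (simp add: add_mult_distrib power3_eq_cube power2_eq_square)
    then have "real (i*q + j*(q+1)) + real (q^3) \<le> real ((q^2 + degree c)*q + j*(q+1))"
      by (metis of_nat_add of_nat_le_iff)
    with 1 show "real (i*q + j*(q+1)) \<le> D - real (q^3)" by linarith
  qed
  then show ?thesis by (rule Wd_of[OF q2]) (simp add: r_def red_dvd[OF q2])
qed

end

theorem theorem2:
  fixes q m l s \<tau> :: nat
    and P :: "nat \<Rightarrow> 'a::{finite, field} \<times> 'a"
    and f \<Lambda> R \<Omega> :: "'a poly poly"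
    and e r :: "nat \<Rightarrow> 'a"
  assumes q_pp: "\<exists>p k. prime p \<and> k \<ge> 1 \<and> q = p ^ k"
    and card_F: "card (UNIV :: 'a set) = q ^ 2"
    and m_lo: "2 * (int (q * (q - 1) div 2) - 1) < int m"
    and m_hi: "m < q ^ 3"
    and P_enum: "bij_betw P {1..q ^ 3} (herm_affine_points q)"
    and f_deg: "herm_deg q f \<le> ereal (real m)"
    and r_def: "\<forall>i\<in>{1..q ^ 3}. r i = herm_eval f (P i) + e i"
    and Lambda_nz: "\<not> herm_eq q \<Lambda> 0"
    and Lambda_loc: "\<forall>i\<in>{1..q ^ 3}. e i \<noteq> 0 \<longrightarrow> herm_eval \<Lambda> (P i) = 0"
    and R_deg: "herm_deg q R < ereal (real (q ^ 3 + 2 * (q * (q - 1) div 2)))"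
    and R_interp: "\<forall>i\<in>{1..q ^ 3}. herm_eval R (P i) = r i"
    and Omega_def: "herm_eq q (\<Omega> * (hX ^ (q ^ 2) - hX)) (\<Lambda> * (f - R))"
    and s_ge: "1 \<le> s" and s_le: "s \<le> l"
    and tau_ge: "herm_deg q \<Lambda> \<le> ereal (real \<tau>)"
  shows
    "(\<forall>t\<in>{1..l}.
        herm_cong q
          (\<Sum>i<s. (\<Lambda> ^ (s - i) * \<Omega> ^ i) *
                  (of_nat (t choose i) * R ^ (t - i) * (hX ^ (q ^ 2) - hX) ^ i))
          (\<Lambda> ^ s * f ^ t)
          (if t < s
           then hX ^ ((t * (q ^ 3 + 2 * (q * (q - 1) div 2) - 1) + \<tau>) div q + 1)
           else (hX ^ (q ^ 2) - hX) ^ s))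
     \<and> (\<forall>i<s. herm_deg q (\<Lambda> ^ (s - i) * \<Omega> ^ i)
               \<le> ereal (real (s * \<tau>) + real i * (2 * real (q * (q - 1) div 2) - 1)))
     \<and> (\<forall>t\<in>{1..l}. herm_deg q (\<Lambda> ^ s * f ^ t) \<le> ereal (real (s * \<tau> + t * m)))"
proof -
  obtain p k where pk: "prime p" "k \<ge> 1" "q = p^k" using q_pp by blast
  have "p \<le> p^k" using pk(2) prime_gt_0_nat[OF pk(1)] by (simp add: self_le_power)
  then have q2: "q \<ge> 2" using prime_ge_2_nat[OF pk(1)] pk(3) by linarith
  have "2*1 \<le> q*(q-1)" using mult_le_mono[OF q2, of 1 "q-1"] q2 by linarith
  then have g1: "1 \<le> q*(q-1) div 2" by linarith
  define g where "g = q*(q-1) div 2"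
  define N where "N = q^3 + 2*g"
  have RN: "real N = real (q^3) + 2 * real g" by (simp add: N_def)
  have dR: "herm_deg q R \<le> ereal (real N - 1)"
  proof (rule herm_deg_lt_nat)
    show "herm_deg q R < ereal (real N)" using R_deg unfolding N_def g_def .
  qed
  have "m + 1 \<le> N" using m_hi g1 unfolding N_def g_def by linarith
  then have "real m + 1 \<le> real N" by (metis of_nat_1 of_nat_add of_nat_le_iff)
  then have "real m \<le> real N - 1" by linarith
  then have dF: "herm_deg q f \<le> ereal (real N - 1)" by (intro order_trans[OF f_deg]) simp
  have dFR: "herm_deg q (f - R) \<le> ereal (real N - 1)" by (rule Wd_diff[OF q2 dF dR])
  have dLFR: "herm_deg q (\<Lambda> * (f - R)) \<le> ereal (real \<tau> + (real N - 1))"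
    by (rule Wd_mult[OF q2 tau_ge dFR])
  have OG: "herm_poly q dvd (\<Omega> * (hX ^ (q ^ 2) - hX) - \<Lambda> * (f - R))"
    using Omega_def by (simp add: herm_eq_def)
  have "herm_deg q (\<Omega> * (hX ^ (q ^ 2) - hX)) \<le> ereal (real \<tau> + (real N - 1))"
    using Wd_cong[OF q2 OG] dLFR by simp
  from Wd_G[OF q2 this] have dO: "herm_deg q \<Omega> \<le> ereal (real \<tau> + (2 * real g - 1))"
    by (simp add: RN)
  have part2: "\<forall>i<s. herm_deg q (\<Lambda> ^ (s - i) * \<Omega> ^ i)
               \<le> ereal (real (s * \<tau>) + real i * (2 * real g - 1))"
  proof (intro allI impI)
    fix i assume "i < s"
    have H: "herm_deg q (\<Lambda> ^ (s - i) * \<Omega> ^ i)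
        \<le> ereal (real (s - i) * real \<tau> + real i * (real \<tau> + (2 * real g - 1)))"
      by (rule Wd_mult[OF q2 Wd_pow[OF q2 tau_ge] Wd_pow[OF q2 dO]])
    have e: "real (s - i) = real s - real i" using \<open>i < s\<close> by (simp add: of_nat_diff)
    have eq: "real (s - i) * real \<tau> + real i * (real \<tau> + (2 * real g - 1))
        = real (s * \<tau>) + real i * (2 * real g - 1)"
      unfolding e of_nat_mult by (simp only: algebra_simps)
    show "herm_deg q (\<Lambda> ^ (s - i) * \<Omega> ^ i) \<le> ereal (real (s * \<tau>) + real i * (2 * real g - 1))"
      using H[unfolded eq] .
  qed
  have part3: "\<forall>t\<in>{1..l}. herm_deg q (\<Lambda> ^ s * f ^ t) \<le> ereal (real (s * \<tau> + t * m))"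
  proof (intro ballI)
    fix t
    have "herm_deg q (\<Lambda> ^ s * f ^ t) \<le> ereal (real s * real \<tau> + real t * real m)"
      by (rule Wd_mult[OF q2 Wd_pow[OF q2 tau_ge] Wd_pow[OF q2 f_deg]])
    then show "herm_deg q (\<Lambda> ^ s * f ^ t) \<le> ereal (real (s * \<tau> + t * m))" by simp
  qed
  have part1: "\<forall>t\<in>{1..l}.
        herm_cong q
          (\<Sum>i<s. (\<Lambda> ^ (s - i) * \<Omega> ^ i) *
                  (of_nat (t choose i) * R ^ (t - i) * (hX ^ (q ^ 2) - hX) ^ i))
          (\<Lambda> ^ s * f ^ t)
          (if t < s
           then hX ^ ((t * (q ^ 3 + 2 * (q * (q - 1) div 2) - 1) + \<tau>) div q + 1)
           else (hX ^ (q ^ 2) - hX) ^ s)"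
  proof (intro ballI)
    fix t
    show "herm_cong q
          (\<Sum>i<s. (\<Lambda> ^ (s - i) * \<Omega> ^ i) *
                  (of_nat (t choose i) * R ^ (t - i) * (hX ^ (q ^ 2) - hX) ^ i))
          (\<Lambda> ^ s * f ^ t)
          (if t < s
           then hX ^ ((t * (q ^ 3 + 2 * (q * (q - 1) div 2) - 1) + \<tau>) div q + 1)
           else (hX ^ (q ^ 2) - hX) ^ s)"
    proof (cases "t < s")
      case True
      have X: "herm_poly q dvd ((\<Sum>i<s. (\<Lambda> ^ (s - i) * \<Omega> ^ i) *
                  (of_nat (t choose i) * R ^ (t - i) * (hX ^ (q ^ 2) - hX) ^ i)) - \<Lambda> ^ s * f ^ t)"
        by (rule cong_main(1)[OF OG True])
      show ?thesis
        unfolding herm_cong_def herm_eq_def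
        by (rule exI[of _ 0]) (simp only: mult_zero_right diff_zero X)
    next
      case False
      have st: "s \<le> t" using False by simp
      obtain h where
        "herm_poly q dvd ((\<Sum>i<s. (\<Lambda> ^ (s - i) * \<Omega> ^ i) *
                  (of_nat (t choose i) * R ^ (t - i) * (hX ^ (q ^ 2) - hX) ^ i)) - \<Lambda> ^ s * f ^ t
                  - (hX ^ (q ^ 2) - hX) ^ s * h)" using cong_main(2)[OF OG st] by blast
      then show ?thesis
        unfolding herm_cong_def herm_eq_def if_not_P[OF False] by (rule exI[of _ h])
    qed
  qed
  show ?thesis using part1 part2 part3 unfolding g_def by blast
qed

end
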